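(* Let $\Gamma=(V,E)$ be a weakly connected simple digraph and $G$ a finite group. Then there exists a map $\rho:E\to G$ such that the voltage graph $(\Gamma,\rho)$ is structurally balanced and nondegenerate if and only if $|V|\ge|G|$.
   Context: $e_{ij}$ is the edge $v_i\to v_j$. A semi-walk from $v_{i_1}$ to $v_{i_n}$ is $w=v_{i_1}a_1\dots a_{n-1}v_{i_n}$ with each $a_j\in\{e_{i_ji_{j+1}},e_{i_{j+1}i_j}\}$; it is closed if $v_{i_1}=v_{i_n}$. $\Gamma$ is weakly connected if any two vertices are joined by a semi-walk. Net voltage: $f(w)=\bar\rho(a_1)\cdots\bar\rho(a_{n-1})$ with $\bar\rho(a_j)=\rho(a_j)$ if $a_j=e_{i_ji_{j+1}}$ and $\rho(a_j)^{-1}$ otherwise; $f$ of a single-vertex semi-walk is the identity $\mathbf 1$. $(\Gamma,\rho)$ is structurally balanced if $f(w)=\mathbf 1$ for every closed semi-walk $w$. With $\mathrm{Net}(v_i,V)=\{f(w): w$ a semi-walk starting at $v_i\}$, $(\Gamma,\rho)$ is nondegenerate if $\mathrm{Net}(v_i,V)=G$ for some vertex $v_i$. *)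

theory Defs
  imports "HOL-Algebra.Group"
begin

text \<open>A semi-walk step is an arc together with a direction flag: (e, True) traverses e forwards,
(e, False) traverses e backwards.\<close>

definition step_src :: "('v \<times> 'v) \<times> bool \<Rightarrow> 'v" where
  "step_src a = (if snd a then fst (fst a) else snd (fst a))"

definition step_tgt :: "('v \<times> 'v) \<times> bool \<Rightarrow> 'v" where
  "step_tgt a = (if snd a then snd (fst a) else fst (fst a))"

inductive semiwalk :: "('v \<times> 'v) set \<Rightarrow> 'v \<Rightarrow> (('v \<times> 'v) \<times> bool) list \<Rightarrow> 'v \<Rightarrow> bool"
  for E where
  sw_nil: "semiwalk E u [] u"
| sw_cons: "\<lbrakk> fst a \<in> E; step_src a = u; semiwalk E (step_tgt a) ws w \<rbrakk>
            \<Longrightarrow> semiwalk E u (a # ws) w"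

definition simple_digraph :: "'v set \<Rightarrow> ('v \<times> 'v) set \<Rightarrow> bool" where
  "simple_digraph V E \<longleftrightarrow> finite V \<and> E \<subseteq> V \<times> V \<and> (\<forall>v. (v, v) \<notin> E)"

definition weakly_connected :: "'v set \<Rightarrow> ('v \<times> 'v) set \<Rightarrow> bool" where
  "weakly_connected V E \<longleftrightarrow> (\<forall>u\<in>V. \<forall>w\<in>V. \<exists>ws. semiwalk E u ws w)"

definition net_voltage :: "('g, 'b) monoid_scheme \<Rightarrow> ('v \<times> 'v \<Rightarrow> 'g)
    \<Rightarrow> (('v \<times> 'v) \<times> bool) list \<Rightarrow> 'g" where
  "net_voltage G \<rho> ws =
     foldr (\<lambda>a acc. (if snd a then \<rho> (fst a) else inv\<^bsub>G\<^esub> (\<rho> (fst a))) \<otimes>\<^bsub>G\<^esub> acc) ws \<one>\<^bsub>G\<^esub>"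

definition structurally_balanced ::
    "'v set \<Rightarrow> ('v \<times> 'v) set \<Rightarrow> ('g, 'b) monoid_scheme \<Rightarrow> ('v \<times> 'v \<Rightarrow> 'g) \<Rightarrow> bool" where
  "structurally_balanced V E G \<rho> \<longleftrightarrow>
     (\<forall>v\<in>V. \<forall>ws. semiwalk E v ws v \<longrightarrow> net_voltage G \<rho> ws = \<one>\<^bsub>G\<^esub>)"

definition Net :: "('v \<times> 'v) set \<Rightarrow> ('g, 'b) monoid_scheme \<Rightarrow> ('v \<times> 'v \<Rightarrow> 'g) \<Rightarrow> 'v \<Rightarrow> 'g set" where
  "Net E G \<rho> v = {net_voltage G \<rho> ws | ws. \<exists>w. semiwalk E v ws w}"

definition nondegenerate ::
    "'v set \<Rightarrow> ('v \<times> 'v) set \<Rightarrow> ('g, 'b) monoid_scheme \<Rightarrow> ('v \<times> 'v \<Rightarrow> 'g) \<Rightarrow> bool" where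
  "nondegenerate V E G \<rho> \<longleftrightarrow> (\<exists>v\<in>V. Net E G \<rho> v = carrier G)"

end

theory Submission
  imports Defs
begin

lemma sw_append:
  "semiwalk E u ws1 w \<Longrightarrow> semiwalk E w ws2 x \<Longrightarrow> semiwalk E u (ws1 @ ws2) x"
  by (induction rule: semiwalk.induct) (auto intro: semiwalk.intros)

definition rwalk :: "(('v \<times> 'v) \<times> bool) list \<Rightarrow> (('v \<times> 'v) \<times> bool) list" where
  "rwalk ws = rev (map (\<lambda>a. (fst a, \<not> snd a)) ws)"

lemma sw_rev:
  "semiwalk E u ws w \<Longrightarrow> semiwalk E w (rwalk ws) u"
proof (induction rule: semiwalk.induct)
  case (sw_nil u) then show ?case by (simp add: rwalk_def semiwalk.intros)
next
  case (sw_cons a u ws w)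
  have "semiwalk E (step_tgt a) [(fst a, \<not> snd a)] u"
    using sw_cons.hyps by (auto intro!: semiwalk.intros simp: step_src_def step_tgt_def)
  then show ?case using sw_cons.IH sw_append by (fastforce simp: rwalk_def)
qed

lemma sw_in_V:
  "semiwalk E u ws w \<Longrightarrow> E \<subseteq> V \<times> V \<Longrightarrow> u \<in> V \<Longrightarrow> w \<in> V"
  by (induction rule: semiwalk.induct) (auto simp: step_src_def step_tgt_def split: if_splits)

context group
begin

lemma nv_carrier:
  assumes "\<rho> \<in> E \<rightarrow> carrier G" "set ws \<subseteq> E \<times> UNIV"
  shows "net_voltage G \<rho> ws \<in> carrier G"
  using assms(2) by (induction ws) (auto simp: net_voltage_def intro!: m_closed dest: funcset_mem[OF assms(1)])

lemma sw_set: "semiwalk E u ws w \<Longrightarrow> set ws \<subseteq> E \<times> UNIV"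
  by (induction rule: semiwalk.induct) (auto simp: mem_Times_iff)

lemma nv_append:
  assumes "\<rho> \<in> E \<rightarrow> carrier G" "set ws1 \<subseteq> E \<times> UNIV" "set ws2 \<subseteq> E \<times> UNIV"
  shows "net_voltage G \<rho> (ws1 @ ws2) = net_voltage G \<rho> ws1 \<otimes> net_voltage G \<rho> ws2"
  using assms(2)
proof (induction ws1)
  case Nil then show ?case using nv_carrier[OF assms(1) assms(3)] by (simp add: net_voltage_def)
next
  case (Cons a ws)
  have c: "net_voltage G \<rho> ws \<in> carrier G" using Cons nv_carrier[OF assms(1)] by auto
  have r: "\<rho> (fst a) \<in> carrier G" using Cons assms(1) by (auto simp: mem_Times_iff)
  show ?case using Cons c r nv_carrier[OF assms(1) assms(3)]
    by (simp add: net_voltage_def m_assoc)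
qed

lemma nv_rev:
  assumes "\<rho> \<in> E \<rightarrow> carrier G" "set ws \<subseteq> E \<times> UNIV"
  shows "net_voltage G \<rho> (rwalk ws) = inv (net_voltage G \<rho> ws)"
  using assms(2)
proof (induction ws)
  case Nil then show ?case by (simp add: net_voltage_def rwalk_def)
next
  case (Cons a ws)
  have c: "net_voltage G \<rho> ws \<in> carrier G" using Cons nv_carrier[OF assms(1)] by auto
  have r: "\<rho> (fst a) \<in> carrier G" using Cons assms(1) by (auto simp: mem_Times_iff)
  have s1: "set (rwalk ws) \<subseteq> E \<times> UNIV" using Cons by (auto simp: rwalk_def mem_Times_iff)
  have s2: "set [(fst a, \<not> snd a)] \<subseteq> E \<times> UNIV" using Cons by (auto simp: mem_Times_iff)
  have "net_voltage G \<rho> (rwalk (a # ws)) = net_voltage G \<rho> (rwalk ws @ [(fst a, \<not> snd a)])"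
    by (simp add: rwalk_def)
  also have "\<dots> = inv (net_voltage G \<rho> ws) \<otimes> net_voltage G \<rho> [(fst a, \<not> snd a)]"
    using nv_append[OF assms(1) s1 s2] Cons by simp
  also have "\<dots> = inv (net_voltage G \<rho> (a # ws))"
    using c r by (simp add: net_voltage_def inv_mult_group)
  finally show ?case .
qed

lemma nv_potential:
  assumes "semiwalk E u ws w" "\<And>x. \<phi> x \<in> carrier G"
  shows "net_voltage G (\<lambda>(x, y). inv (\<phi> x) \<otimes> \<phi> y) ws = inv (\<phi> u) \<otimes> \<phi> w"
  using assms(1)
proof (induction rule: semiwalk.induct)
  case (sw_nil u) then show ?case using assms(2) by (simp add: net_voltage_def)
next
  case (sw_cons a u ws w)
  obtain x y b where a: "a = ((x, y), b)" by (metis prod.collapse)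
  show ?case
  proof (cases b)
    case True
    then show ?thesis using sw_cons a assms(2)
      by (simp add: net_voltage_def step_src_def step_tgt_def m_assoc[symmetric]) (simp add: m_assoc)
  next
    case False
    then show ?thesis using sw_cons a assms(2)
      by (simp add: net_voltage_def step_src_def step_tgt_def m_assoc[symmetric] inv_mult_group) (simp add: m_assoc)
  qed
qed

lemma main_iff:
  assumes sd: "simple_digraph V E" and wc: "weakly_connected V E" and fin: "finite (carrier G)"
  shows "(\<exists>\<rho> \<in> E \<rightarrow> carrier G. structurally_balanced V E G \<rho> \<and> nondegenerate V E G \<rho>)
         \<longleftrightarrow> card V \<ge> card (carrier G)"
proof
  have fV: "finite V" and EV: "E \<subseteq> V \<times> V" using sd by (auto simp: simple_digraph_def)
  assume "\<exists>\<rho> \<in> E \<rightarrow> carrier G. structurally_balanced V E G \<rho> \<and> nondegenerate V E G \<rho>"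
  then obtain \<rho> v where \<rho>: "\<rho> \<in> E \<rightarrow> carrier G" and bal: "structurally_balanced V E G \<rho>"
    and v: "v \<in> V" and net: "Net E G \<rho> v = carrier G"
    by (auto simp: nondegenerate_def)
  define h where "h w = net_voltage G \<rho> (SOME ws. semiwalk E v ws w)" for w
  have "Net E G \<rho> v \<subseteq> h ` V"
  proof
    fix g assume "g \<in> Net E G \<rho> v"
    then obtain ws w where ws: "semiwalk E v ws w" and g: "g = net_voltage G \<rho> ws"
      by (auto simp: Net_def)
    have wV: "w \<in> V" using sw_in_V[OF ws EV v] .
    define ws2 where "ws2 = (SOME ws. semiwalk E v ws w)"
    have ws2: "semiwalk E v ws2 w" unfolding ws2_def using ws by (rule someI)
    have cl: "semiwalk E v (ws @ rwalk ws2) v" using sw_append[OF ws sw_rev[OF ws2]] .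
    have "net_voltage G \<rho> (ws @ rwalk ws2) = \<one>" using bal cl v
      by (auto simp: structurally_balanced_def)
    moreover have "net_voltage G \<rho> (ws @ rwalk ws2) = g \<otimes> inv (h w)"
      unfolding g h_def ws2_def[symmetric]
      using nv_append[OF \<rho> sw_set[OF ws] sw_set[OF sw_rev[OF ws2]]] nv_rev[OF \<rho> sw_set[OF ws2]]
      by simp
    ultimately have "g = h w"
      using nv_carrier[OF \<rho> sw_set[OF ws]] nv_carrier[OF \<rho> sw_set[OF ws2]] g
      unfolding h_def ws2_def[symmetric]
      by (metis inv_closed inv_equality l_inv r_inv)
    then show "g \<in> h ` V" using wV by blast
  qed
  then have "card (carrier G) \<le> card (h ` V)" using net fV by (metis card_mono finite_imageI)
  also have "\<dots> \<le> card V" using fV by (rule card_image_le)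
  finally show "card (carrier G) \<le> card V" .
next
  have fV: "finite V" and EV: "E \<subseteq> V \<times> V" using sd by (auto simp: simple_digraph_def)
  assume le: "card (carrier G) \<le> card V"
  obtain g where g: "g ` carrier G \<subseteq> V" "inj_on g (carrier G)"
    using card_le_inj[OF fin fV le] by blast
  define \<phi> where "\<phi> w = (if w \<in> g ` carrier G then the_inv_into (carrier G) g w else \<one>)" for w
  have \<phi>c: "\<phi> w \<in> carrier G" for w
    using g by (auto simp: \<phi>_def the_inv_into_f_f)
  have \<phi>g: "x \<in> carrier G \<Longrightarrow> \<phi> (g x) = x" for x
    using g by (auto simp: \<phi>_def the_inv_into_f_f)
  define \<rho> where "\<rho> = (\<lambda>(x, y). inv (\<phi> x) \<otimes> \<phi> y)"
  have pot: "net_voltage G \<rho> ws = inv (\<phi> u) \<otimes> \<phi> w" if "semiwalk E u ws w" for u ws w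
    unfolding \<rho>_def by (rule nv_potential[OF that \<phi>c])
  have "carrier G \<noteq> {}" by blast
  then obtain v where v: "v \<in> V" using g by blast
  have "\<rho> \<in> E \<rightarrow> carrier G" using \<phi>c by (auto simp: \<rho>_def)
  moreover have "structurally_balanced V E G \<rho>"
    unfolding structurally_balanced_def
    using pot \<phi>c by auto
  moreover have "Net E G \<rho> v = carrier G"
  proof
    show "Net E G \<rho> v \<subseteq> carrier G"
      unfolding Net_def using pot \<phi>c by auto
  next
    show "carrier G \<subseteq> Net E G \<rho> v"
    proof
      fix x assume x: "x \<in> carrier G"
      define w where "w = g (\<phi> v \<otimes> x)"
      have wV: "w \<in> V" using g x \<phi>c by (auto simp: w_def)
      obtain ws where ws: "semiwalk E v ws w" using wc v wV by (auto simp: weakly_connected_def)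
      have "net_voltage G \<rho> ws = inv (\<phi> v) \<otimes> (\<phi> v \<otimes> x)"
        unfolding pot[OF ws] w_def using \<phi>g x \<phi>c by simp
      also have "\<dots> = x" using x \<phi>c by (simp add: m_assoc[symmetric])
      finally show "x \<in> Net E G \<rho> v" using ws by (auto simp: Net_def)
    qed
  qed
  ultimately show "\<exists>\<rho> \<in> E \<rightarrow> carrier G. structurally_balanced V E G \<rho> \<and> nondegenerate V E G \<rho>"
    using v by (auto simp: nondegenerate_def)
qed


end

theorem theorem2:
  fixes V :: "'v set" and E :: "('v \<times> 'v) set" and G :: "('g, 'b) monoid_scheme"
  assumes "simple_digraph V E"
    and "weakly_connected V E"
    and "group G"
    and "finite (carrier G)"
  shows "(\<exists>\<rho> \<in> E \<rightarrow> carrier G. structurally_balanced V E G \<rho> \<and> nondegenerate V E G \<rho>)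
         \<longleftrightarrow> card V \<ge> card (carrier G)"
  using group.main_iff[OF assms(3) assms(1) assms(2) assms(4)] .

end
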